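(* Let $\mathcal G=((V,E),(V_1,V_2,V_\Diamond),\delta,w)$ be a stochastic game and $\varphi$ a bounded prefix-independent objective. Consider the classes of the expected value vector $\mathsf r^*=(\mathbb{E}_v(\varphi))_{v\in V}$, and suppose exactly $m\ge1$ of them contain boundary vertices. Index the classes as $C_1,\dots,C_k$ with values $\bar r_1,\dots,\bar r_k$ so that $C_1,\dots,C_m$ are those containing boundary vertices, in increasing order of value, and $C_{m+1},\dots,C_k$ are those without boundary vertices, in increasing order of value. Let $B_0$ be a positive integer such that each of $\bar r_{m+1},\dots,\bar r_k$ can be written as $p/q$ with integers $p,q$, $0<q\le B_0$. For $1\le i\le m$ fix a boundary vertex $u_i$ of $C_i$ and for $1\le j\le k$ let $p_{i,j}=\sum_{v'\in E(u_i)\cap C_j}\delta(u_i)(v')$. Let $Q_B=(p_{i,j})_{1\le i,j\le m}$, $Q_C=(p_{i,j})_{1\le i\le m,\,m+1\le j\le k}$, $\bar r_C=(\bar r_{m+1},\dots,\bar r_k)^{T}$, $I$ the $m\times m$ identity matrix, and $\alpha$ the least common multiple of the denominators of the $p_{i,j}$ ($1\le i\le m$, $1\le j\le k$). For $1\le i\le m$ let $N_i$ be the determinant of the matrix obtained from $\alpha(I-Q_B)$ by replacing its $i$-th column with the column vector $\alpha Q_C\bar r_C$. Then, written in lowest terms, $N_i$ has denominator at most $B_0^{k-m}\le B_0^{|V|}$.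
   Context: A stochastic game is $\mathcal{G}=((V,E),(V_1,V_2,V_\Diamond),\delta,w)$: a finite directed graph $(V,E)$ in which every vertex $v$ has a nonempty out-neighbour set $E(v)$, a partition of $V$ into Player 1, Player 2 and probabilistic vertices, a function $\delta$ giving each $v\in V_\Diamond$ a rational probability distribution $\delta(v)$ on $E(v)$, positive on every out-neighbour, and payoffs $w:E\to\mathbb{Q}$. Plays are infinite paths; deterministic strategies of Player $i$ map finite prefixes ending in $V_i$ to an out-neighbour of the last vertex; a strategy pair and initial vertex induce a probability measure on plays. An objective $\varphi$ is a Borel-measurable real function on plays; bounded if $|\varphi|\le W_\varphi$ for an integer $W_\varphi$; prefix-independent if plays with a common suffix get equal value. $\mathbb{E}_v(\varphi)=\sup_{\sigma_1}\inf_{\sigma_2}\mathbb{E}^{\sigma_1,\sigma_2}_v[\varphi]=\inf_{\sigma_2}\sup_{\sigma_1}\mathbb{E}^{\sigma_1,\sigma_2}_v[\varphi]$ (Player 1 maximises, Player 2 minimises). For a real vector $\mathsf r$ indexed by $V$, its classes are the maximal nonempty sets of vertices on which $\mathsf r$ is constant (the constant being the class value); a vertex $v$ of class $C$ is a boundary vertex if $v\in V_\Diamond$ and $E(v)\not\subseteq C$. *)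

theory Defs
  imports "HOL-Probability.Probability" "Jordan_Normal_Form.Determinant"
begin

record 'v sgame =
  gV  :: "'v set"
  gE  :: "('v \<times> 'v) set"
  gV1 :: "'v set"
  gV2 :: "'v set"
  gVP :: "'v set"
  gdelta :: "'v \<Rightarrow> 'v \<Rightarrow> rat"
  gw  :: "'v \<times> 'v \<Rightarrow> rat"

definition succs :: "'v sgame \<Rightarrow> 'v \<Rightarrow> 'v set" where
  "succs G v = {u. (v, u) \<in> gE G}"

definition wf_sgame :: "'v sgame \<Rightarrow> bool" where
  "wf_sgame G \<longleftrightarrow>
     finite (gV G) \<and> gE G \<subseteq> gV G \<times> gV G \<and>
     (\<forall>v\<in>gV G. succs G v \<noteq> {}) \<and>
     gV1 G \<union> gV2 G \<union> gVP G = gV G \<and>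
     gV1 G \<inter> gV2 G = {} \<and> gV1 G \<inter> gVP G = {} \<and> gV2 G \<inter> gVP G = {} \<and>
     (\<forall>v\<in>gVP G. (\<forall>u\<in>succs G v. gdelta G v u > 0) \<and>
                  (\<forall>u. u \<notin> succs G v \<longrightarrow> gdelta G v u = 0) \<and>
                  (\<Sum>u\<in>succs G v. gdelta G v u) = 1)"

definition is_play :: "'v sgame \<Rightarrow> 'v stream \<Rightarrow> bool" where
  "is_play G s \<longleftrightarrow> s !! 0 \<in> gV G \<and> (\<forall>n. (s !! n, s !! Suc n) \<in> gE G)"

definition strategies :: "'v sgame \<Rightarrow> 'v set \<Rightarrow> ('v list \<Rightarrow> 'v) set" where
  "strategies G Vi = {\<sigma>. \<forall>h. h \<noteq> [] \<and> last h \<in> Vi \<longrightarrow> (last h, \<sigma> h) \<in> gE G}"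

definition trans_prob :: "'v sgame \<Rightarrow> ('v list \<Rightarrow> 'v) \<Rightarrow> ('v list \<Rightarrow> 'v) \<Rightarrow> 'v list \<Rightarrow> 'v \<Rightarrow> real" where
  "trans_prob G \<sigma>1 \<sigma>2 h u =
     (if last h \<in> gV1 G then (if \<sigma>1 h = u then 1 else 0)
      else if last h \<in> gV2 G then (if \<sigma>2 h = u then 1 else 0)
      else real_of_rat (gdelta G (last h) u))"

definition cyl_prob :: "'v sgame \<Rightarrow> ('v list \<Rightarrow> 'v) \<Rightarrow> ('v list \<Rightarrow> 'v) \<Rightarrow> 'v \<Rightarrow> 'v list \<Rightarrow> real" where
  "cyl_prob G \<sigma>1 \<sigma>2 v h =
     (if h = [] then 1
      else (if hd h = v then 1 else 0) *
           (\<Prod>i<length h - 1. trans_prob G \<sigma>1 \<sigma>2 (take (Suc i) h) (h ! Suc i)))"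

(* the probability measure on plays induced by a strategy pair and initial vertex
   (unique by Caratheodory; exists by Ionescu-Tulcea) *)
definition play_measure :: "'v sgame \<Rightarrow> ('v list \<Rightarrow> 'v) \<Rightarrow> ('v list \<Rightarrow> 'v) \<Rightarrow> 'v \<Rightarrow> 'v stream measure" where
  "play_measure G \<sigma>1 \<sigma>2 v = (SOME M.
      sets M = sets (stream_space (count_space UNIV)) \<and> prob_space M \<and>
      (\<forall>h. emeasure M {s \<in> space M. stake (length h) s = h} = ennreal (cyl_prob G \<sigma>1 \<sigma>2 v h)))"

definition expected :: "'v sgame \<Rightarrow> ('v stream \<Rightarrow> real) \<Rightarrow> ('v list \<Rightarrow> 'v) \<Rightarrow> ('v list \<Rightarrow> 'v) \<Rightarrow> 'v \<Rightarrow> real" where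
  "expected G \<phi> \<sigma>1 \<sigma>2 v = integral\<^sup>L (play_measure G \<sigma>1 \<sigma>2 v) \<phi>"

definition game_value :: "'v sgame \<Rightarrow> ('v stream \<Rightarrow> real) \<Rightarrow> 'v \<Rightarrow> real" where
  "game_value G \<phi> v =
     (SUP \<sigma>1\<in>strategies G (gV1 G). INF \<sigma>2\<in>strategies G (gV2 G). expected G \<phi> \<sigma>1 \<sigma>2 v)"

definition objective :: "'v sgame \<Rightarrow> ('v stream \<Rightarrow> real) \<Rightarrow> bool" where
  "objective G \<phi> \<longleftrightarrow> \<phi> \<in> borel_measurable (stream_space (count_space UNIV))"

definition bounded_obj :: "'v sgame \<Rightarrow> ('v stream \<Rightarrow> real) \<Rightarrow> bool" where
  "bounded_obj G \<phi> \<longleftrightarrow> (\<exists>W::int. \<forall>s. is_play G s \<longrightarrow> \<bar>\<phi> s\<bar> \<le> of_int W)"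

definition prefix_independent :: "'v sgame \<Rightarrow> ('v stream \<Rightarrow> real) \<Rightarrow> bool" where
  "prefix_independent G \<phi> \<longleftrightarrow>
     (\<forall>s t i j. is_play G s \<and> is_play G t \<and> sdrop i s = sdrop j t \<longrightarrow> \<phi> s = \<phi> t)"

definition value_classes :: "'v sgame \<Rightarrow> ('v \<Rightarrow> real) \<Rightarrow> 'v set set" where
  "value_classes G r = {{u \<in> gV G. r u = r v} | v. v \<in> gV G}"

definition boundary_vertex :: "'v sgame \<Rightarrow> 'v set \<Rightarrow> 'v \<Rightarrow> bool" where
  "boundary_vertex G C v \<longleftrightarrow> v \<in> C \<and> v \<in> gVP G \<and> \<not> succs G v \<subseteq> C"

end

theory Submission
  imports Defs
begin
lemma denom_le:
  assumes "(x::rat) = of_int n / of_int D" "D > 0"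
  shows "snd (quotient_of x) \<le> D"
proof -
  obtain a b where ab: "quotient_of x = (a, b)" by (cases "quotient_of x") auto
  have b: "b > 0" using quotient_of_denom_pos[OF ab] .
  have cop: "coprime a b" using quotient_of_coprime[OF ab] .
  have "of_int a / of_int b = (of_int n / of_int D :: rat)" using quotient_of_div[OF ab] assms(1) by simp
  hence "of_int (a * D) = (of_int (n * b) :: rat)" using b assms(2)
    by (simp add: field_simps)
  hence e: "a * D = n * b" by linarith
  hence "b dvd a * D" by simp
  hence "b dvd D" using cop by (simp add: coprime_commute coprime_dvd_mult_right_iff)
  hence "b \<le> D" using assms(2) by (simp add: zdvd_imp_le)
  thus ?thesis using ab by simp
qed

lemma mult_denom_Ints:
  assumes "snd (quotient_of (x::rat)) dvd N"
  shows "of_int N * x \<in> \<int>"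
proof -
  obtain a b where ab: "quotient_of x = (a, b)" by (cases "quotient_of x") auto
  have b: "b > 0" using quotient_of_denom_pos[OF ab] .
  obtain t where t: "N = b * t" using assms ab by (auto elim: dvdE)
  have "of_int N * x = of_int (b * t) * (of_int a / of_int b)" using quotient_of_div[OF ab] t by simp
  also have "\<dots> = of_int (a * t)" using b by (simp add: field_simps)
  finally show ?thesis by simp
qed

lemma det_Ints:
  assumes "\<And>a b. a < dim_row A \<Longrightarrow> b < dim_col A \<Longrightarrow> A $$ (a, b) \<in> \<int>"
  shows "det (A :: real mat) \<in> \<int>"
proof (cases "dim_row A = dim_col A")
  case True
  have "(\<Sum>p\<in>{p. p permutes {0..<dim_row A}}. signof p * (\<Prod>i = 0..<dim_row A. A $$ (i, p i))) \<in> \<int>"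
  proof (rule Ints_sum, rule Ints_mult)
    fix p assume "p \<in> {p. p permutes {0..<dim_row A}}"
    hence p: "p permutes {0..<dim_row A}" by simp
    show "signof p \<in> \<int>" by (simp add: sign_def)
    show "(\<Prod>i = 0..<dim_row A. A $$ (i, p i)) \<in> \<int>"
    proof (rule Ints_prod)
      fix i assume "i \<in> {0..<dim_row A}"
      then show "A $$ (i, p i) \<in> \<int>" using True assms permutes_in_image[OF p] by auto
    qed
  qed
  then show ?thesis unfolding det_def using True by simp
qed (simp add: det_def)

lemma det_replace_col_Ints:
  fixes A :: "real mat" and c :: "real Matrix.vec"
  assumes A: "A \<in> carrier_mat n n" and i: "i < n"
    and Aint: "\<And>a b. a < n \<Longrightarrow> b < n \<Longrightarrow> A $$ (a, b) \<in> \<int>"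
    and cint: "\<And>a. a < n \<Longrightarrow> D * c $ a \<in> \<int>"
  shows "D * det (replace_col A c i) \<in> \<int>"
proof -
  let ?M = "replace_col A c i"
  have M: "?M \<in> carrier_mat n n" using A by (auto simp: replace_col_def)
  have "det ?M = (\<Sum>a<n. ?M $$ (a,i) * cofactor ?M a i)"
    by (rule laplace_expansion_column[OF M i])
  hence "D * det ?M = (\<Sum>a<n. (D * c $ a) * cofactor ?M a i)"
    using A i by (simp add: sum_distrib_left replace_col_def mult.assoc)
  also have "\<dots> \<in> \<int>"
  proof (rule Ints_sum, rule Ints_mult)
    fix a assume a: "a \<in> {..<n}"
    show "D * c $ a \<in> \<int>" using a cint by auto
    have "det (mat_delete ?M a i) \<in> \<int>"
    proof (rule det_Ints)
      fix x y assume "x < dim_row (mat_delete ?M a i)" "y < dim_col (mat_delete ?M a i)"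
      then show "mat_delete ?M a i $$ (x, y) \<in> \<int>"
        using A i Aint by (auto simp: mat_delete_def replace_col_def)
    qed
    then show "cofactor ?M a i \<in> \<int>" unfolding cofactor_def by simp
  qed
  finally show ?thesis .
qed
lemma det_replace_col_zero:
  fixes A :: "real mat"
  assumes A: "A \<in> carrier_mat n n" and i: "i < n"
  shows "det (replace_col A (0\<^sub>v n) i) = 0"
proof -
  let ?M = "replace_col A (0\<^sub>v n) i"
  have M: "?M \<in> carrier_mat n n" using A by (auto simp: replace_col_def)
  have "det ?M = (\<Sum>a<n. ?M $$ (a,i) * cofactor ?M a i)"
    by (rule laplace_expansion_column[OF M i])
  also have "\<dots> = 0" using A i by (simp add: replace_col_def)
  finally show ?thesis .
qed

lemma real_denom_Ints:
  assumes "snd (quotient_of (x::rat)) dvd N"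
  shows "real_of_int N * real_of_rat x \<in> \<int>"
proof -
  obtain z where z: "of_int N * x = of_int z" using mult_denom_Ints[OF assms] by (auto elim: Ints_cases)
  have "real_of_int N * real_of_rat x = real_of_rat (of_int N * x)" by (simp add: of_rat_mult)
  also have "\<dots> = of_int z" using z by simp
  finally show ?thesis by simp
qed

theorem proposition14:
  fixes G :: "'v sgame" and \<phi> :: "'v stream \<Rightarrow> real"
    and k m :: nat and C :: "nat \<Rightarrow> 'v set" and rbar :: "nat \<Rightarrow> real"
    and B0 :: int and u :: "nat \<Rightarrow> 'v"
  assumes G: "wf_sgame G"
    and obj: "objective G \<phi>" and bnd: "bounded_obj G \<phi>" and pind: "prefix_independent G \<phi>"
    and m1: "1 \<le> m"
    and C_bij: "bij_betw C {1..k} (value_classes G (game_value G \<phi>))"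
    and rbar_val: "\<forall>i\<in>{1..k}. \<forall>v\<in>C i. rbar i = game_value G \<phi> v"
    and bdry: "\<forall>i\<in>{1..k}. (\<exists>v. boundary_vertex G (C i) v) \<longleftrightarrow> i \<le> m"
    and incB: "strict_mono_on {1..m} rbar"
    and incC: "strict_mono_on {m+1..k} rbar"
    and B0: "0 < B0"
    and ratC: "\<forall>j\<in>{m+1..k}. \<exists>p q::int. 0 < q \<and> q \<le> B0 \<and> rbar j = of_int p / of_int q"
    and u: "\<forall>i\<in>{1..m}. boundary_vertex G (C i) (u i)"
  shows
    "let p = (\<lambda>i j. \<Sum>v'\<in>succs G (u i) \<inter> C j. gdelta G (u i) v');
         \<alpha> = Lcm {snd (quotient_of (p i j)) | i j. i \<in> {1..m} \<and> j \<in> {1..k}};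
         A = mat m m (\<lambda>(a, b). real_of_int \<alpha> *
               ((if a = b then 1 else 0) - real_of_rat (p (a + 1) (b + 1))));
         c = vec m (\<lambda>a. real_of_int \<alpha> *
               (\<Sum>j\<in>{m+1..k}. real_of_rat (p (a + 1) j) * rbar j));
         N = (\<lambda>i. det (replace_col A c (i - 1)))
     in \<forall>i\<in>{1..m}. \<exists>x::rat. N i = real_of_rat x \<and>
           snd (quotient_of x) \<le> B0 ^ (k - m) \<and> B0 ^ (k - m) \<le> B0 ^ card (gV G)"
proof -
  define p where "p = (\<lambda>i j. \<Sum>v'\<in>succs G (u i) \<inter> C j. gdelta G (u i) v')"
  define \<alpha> where "\<alpha> = Lcm {snd (quotient_of (p i j)) | i j. i \<in> {1..m} \<and> j \<in> {1..k}}"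
  define A where "A = mat m m (\<lambda>(a, b). real_of_int \<alpha> *
               ((if a = b then 1 else 0) - real_of_rat (p (a + 1) (b + 1))))"
  define c where "c = vec m (\<lambda>a. real_of_int \<alpha> *
               (\<Sum>j\<in>{m+1..k}. real_of_rat (p (a + 1) j) * rbar j))"
  have Acar: "A \<in> carrier_mat m m" unfolding A_def by simp
  have fin: "finite (gV G)" using G unfolding wf_sgame_def by simp
  have "k = card (value_classes G (game_value G \<phi>))"
    using bij_betw_same_card[OF C_bij] by simp
  also have "\<dots> \<le> card (gV G)"
  proof -
    have "value_classes G (game_value G \<phi>) = (\<lambda>v. {u \<in> gV G. game_value G \<phi> u = game_value G \<phi> v}) ` gV G"
      unfolding value_classes_def by auto
    then show ?thesis using card_image_le[OF fin] by simp
  qed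
  finally have kV: "k \<le> card (gV G)" .
  have B0pow: "B0 ^ (k - m) \<le> B0 ^ card (gV G)"
    using B0 kV by (intro power_increasing) auto
  have main: "\<exists>x::rat. det (replace_col A c (i - 1)) = real_of_rat x \<and> snd (quotient_of x) \<le> B0 ^ (k - m)"
    if i: "i \<in> {1..m}" for i
  proof (cases "k \<le> m")
    case True
    have "c = 0\<^sub>v m" unfolding c_def using True by auto
    then have "det (replace_col A c (i - 1)) = 0"
      using det_replace_col_zero[OF Acar, of "i - 1"] i by auto
    then show ?thesis using True by (intro exI[of _ 0]) auto
  next
    case False
    obtain P Q where PQ: "\<forall>j\<in>{m+1..k}. 0 < Q j \<and> Q j \<le> B0 \<and> rbar j = of_int (P j) / of_int (Q j)"
      using ratC by metis
    define D where "D = (\<Prod>j\<in>{m+1..k}. Q j)"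
    have Dpos: "D > 0" unfolding D_def using PQ by (intro prod_pos) auto
    have DB: "D \<le> B0 ^ (k - m)"
    proof -
      have "D \<le> (\<Prod>j\<in>{m+1..k}. B0)" unfolding D_def using PQ
        by (intro prod_mono) (auto simp: less_imp_le)
      then show ?thesis by simp
    qed
    have Drbar: "real_of_int D * rbar j \<in> \<int>" if j: "j \<in> {m+1..k}" for j
    proof -
      have "D = Q j * (\<Prod>j'\<in>{m+1..k} - {j}. Q j')"
        unfolding D_def using j by (simp add: prod.remove)
      moreover have "Q j > 0" "rbar j = of_int (P j) / of_int (Q j)" using PQ j by auto
      ultimately have "real_of_int D * rbar j = of_int (P j * (\<Prod>j'\<in>{m+1..k} - {j}. Q j'))"
        by simp
      then show ?thesis by (simp only: Ints_of_int)
    qed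
    have adv: "real_of_int \<alpha> * real_of_rat (p a j) \<in> \<int>" if "a \<in> {1..m}" "j \<in> {1..k}" for a j
      by (rule real_denom_Ints, unfold \<alpha>_def, rule dvd_Lcm) (use that in blast)
    have Aint: "A $$ (a, b) \<in> \<int>" if "a < m" "b < m" for a b
    proof -
      have "A $$ (a, b) = real_of_int \<alpha> * (if a = b then 1 else 0) - real_of_int \<alpha> * real_of_rat (p (a + 1) (b + 1))"
        unfolding A_def using that by (simp add: right_diff_distrib)
      moreover have "real_of_int \<alpha> * real_of_rat (p (a + 1) (b + 1)) \<in> \<int>"
        using that False by (intro adv) auto
      ultimately show ?thesis by auto
    qed
    have cint: "real_of_int D * c $ a \<in> \<int>" if "a < m" for a
    proof -
      have "real_of_int D * c $ a = (\<Sum>j\<in>{m+1..k}. (real_of_int \<alpha> * real_of_rat (p (a + 1) j)) * (real_of_int D * rbar j))"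
        unfolding c_def using that by (simp add: sum_distrib_left ac_simps)
      also have "\<dots> \<in> \<int>"
      proof (rule Ints_sum, rule Ints_mult)
        fix j assume j: "j \<in> {m+1..k}"
        show "real_of_int D * rbar j \<in> \<int>" using Drbar[OF j] .
        show "real_of_int \<alpha> * real_of_rat (p (a + 1) j) \<in> \<int>" using j that by (intro adv) auto
      qed
      finally show ?thesis .
    qed
    have "real_of_int D * det (replace_col A c (i - 1)) \<in> \<int>"
      using i by (intro det_replace_col_Ints[OF Acar _ Aint cint]) auto
    then obtain z where z: "real_of_int D * det (replace_col A c (i - 1)) = of_int z" by (auto elim: Ints_cases)
    define x where "x = (of_int z / of_int D :: rat)"
    have "det (replace_col A c (i - 1)) = real_of_rat x"
      unfolding x_def using z Dpos by (simp add: of_rat_divide field_simps)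
    moreover have "snd (quotient_of x) \<le> B0 ^ (k - m)"
      using denom_le[OF x_def Dpos] DB by simp
    ultimately show ?thesis by blast
  qed
  show ?thesis
    unfolding Let_def using main B0pow unfolding p_def \<alpha>_def A_def c_def by blast
qed

end
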